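(* Let $N=n$ be prime, $f=x_1^N+\dots+x_N^N$, $S\subseteq S_N$, $G=S\ltimes\mathrm{SL}_f$. Let $u=\sigma g\in G$ ($\sigma\in S$, $g\in\mathrm{SL}_f$) where $\sigma=\prod_{a=1}^m\sigma_a$ is the decomposition into disjoint cycles (cycles of length 1 included) with $m\ge 2$, and let $i_a$ be the first index of the support of $\sigma_a$. Then there exist integers $d_1,\dots,d_m$ such that $u$ is conjugate in $G$ to $\prod_{a=1}^m\sigma_at_{i_a}^{d_a}$.
   Context: $\zeta=\exp(2\pi\sqrt{-1}/N)$; $t_k$ is the diagonal map multiplying $x_k$ by $\zeta$ and fixing the other coordinates; $G_f^d=\langle t_1,\dots,t_N\rangle$, $\mathrm{SL}_f=\{g\in G_f^d:\det g=1\}$; $S_N$ acts on $\mathbb C^N$ by permuting coordinates and $S\ltimes\mathrm{SL}_f\subseteq GL_N(\mathbb C)$ is the generated group. *)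

theory Defs
  imports "Jordan_Normal_Form.Determinant" "HOL-Combinatorics.Permutations" Complex_Main
begin

text \<open>Indices are 0-based: coordinates x_1..x_N correspond to 0..N-1.\<close>

definition zeta :: "nat \<Rightarrow> complex" where
  "zeta N = exp (2 * pi * \<i> / of_nat N)"

definition tmat :: "nat \<Rightarrow> nat \<Rightarrow> complex mat" where
  "tmat N k = mat N N (\<lambda>(i,j). if i = j then (if i = k then zeta N else 1) else 0)"

definition tpow :: "nat \<Rightarrow> nat \<Rightarrow> int \<Rightarrow> complex mat" where
  "tpow N k d = mat N N (\<lambda>(i,j). if i = j then (if i = k then zeta N powi d else 1) else 0)"

definition perm_mat :: "nat \<Rightarrow> (nat \<Rightarrow> nat) \<Rightarrow> complex mat" where
  "perm_mat N \<sigma> = mat N N (\<lambda>(i,j). if i = \<sigma> j then 1 else 0)"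

inductive_set gen_grp :: "nat \<Rightarrow> complex mat set \<Rightarrow> complex mat set" for N X where
  one: "1\<^sub>m N \<in> gen_grp N X"
| gen: "x \<in> X \<Longrightarrow> x \<in> gen_grp N X"
| mult: "a \<in> gen_grp N X \<Longrightarrow> b \<in> gen_grp N X \<Longrightarrow> a * b \<in> gen_grp N X"
| inv: "a \<in> gen_grp N X \<Longrightarrow> b \<in> carrier_mat N N \<Longrightarrow> a * b = 1\<^sub>m N \<Longrightarrow> b \<in> gen_grp N X"

definition Gfd :: "nat \<Rightarrow> complex mat set" where
  "Gfd N = gen_grp N {tmat N k | k. k < N}"

definition SLf :: "nat \<Rightarrow> complex mat set" where
  "SLf N = {g \<in> Gfd N. det g = 1}"

text \<open>The group S \<ltimes> SL_f generated by the permutation matrices of S and SL_f.\<close>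
definition SG :: "nat \<Rightarrow> (nat \<Rightarrow> nat) set \<Rightarrow> complex mat set" where
  "SG N S = gen_grp N (perm_mat N ` S \<union> SLf N)"

definition cyc_orbit :: "(nat \<Rightarrow> nat) \<Rightarrow> nat \<Rightarrow> nat set" where
  "cyc_orbit \<sigma> i = {(\<sigma> ^^ k) i | k. True}"

definition cycle_perm :: "(nat \<Rightarrow> nat) \<Rightarrow> nat \<Rightarrow> (nat \<Rightarrow> nat)" where
  "cycle_perm \<sigma> i = (\<lambda>j. if j \<in> cyc_orbit \<sigma> i then \<sigma> j else j)"

definition num_cycles :: "nat \<Rightarrow> (nat \<Rightarrow> nat) \<Rightarrow> nat" where
  "num_cycles N \<sigma> = card {cyc_orbit \<sigma> i | i. i < N}"

definition cycle_reps :: "nat \<Rightarrow> (nat \<Rightarrow> nat) \<Rightarrow> nat set" where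
  "cycle_reps N \<sigma> = {i. i < N \<and> i = Min (cyc_orbit \<sigma> i)}"

text \<open>prod_a sigma_a t_(i_a)^(d_a), the exponent of cycle a being d applied to its first index.\<close>
definition cycle_normal_form :: "nat \<Rightarrow> (nat \<Rightarrow> nat) \<Rightarrow> (nat \<Rightarrow> int) \<Rightarrow> complex mat" where
  "cycle_normal_form N \<sigma> d =
     foldr (\<lambda>i A. perm_mat N (cycle_perm \<sigma> i) * tpow N i (d i) * A)
           (sorted_list_of_set (cycle_reps N \<sigma>)) (1\<^sub>m N)"

definition conj_in :: "nat \<Rightarrow> complex mat set \<Rightarrow> complex mat \<Rightarrow> complex mat \<Rightarrow> bool" where
  "conj_in N G u v = (\<exists>h\<in>G. \<exists>h'\<in>G. h * h' = 1\<^sub>m N \<and> h * u * h' = v)"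

end

theory Submission imports Defs "HOL-Combinatorics.Cycles" begin


definition MM :: "nat \<Rightarrow> (nat\<Rightarrow>nat) \<Rightarrow> (nat \<Rightarrow> complex) \<Rightarrow> complex mat" where
 "MM N \<pi> t = mat N N (\<lambda>(i,j). if i = \<pi> j then t j else 0)"

lemma MM_carrier[simp]: "MM N \<pi> t \<in> carrier_mat N N" by (simp add: MM_def)
lemma MM_dims[simp]: "dim_row (MM N \<pi> t) = N" "dim_col (MM N \<pi> t) = N" by (simp_all add: MM_def)

lemma MM_mult:
  assumes "\<forall>j<N. \<tau> j < N"
  shows "MM N \<pi> t * MM N \<tau> s = MM N (\<pi> \<circ> \<tau>) (\<lambda>j. t (\<tau> j) * s j)"
proof (rule eq_matI)
  fix i j assume i: "i < dim_row (MM N (\<pi> \<circ> \<tau>) (\<lambda>j. t (\<tau> j) * s j))" and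
    j: "j < dim_col (MM N (\<pi> \<circ> \<tau>) (\<lambda>j. t (\<tau> j) * s j))"
  have "(MM N \<pi> t * MM N \<tau> s) $$ (i,j) = (\<Sum>k\<in>{0..<N}. (if i = \<pi> k then t k else 0) * (if k = \<tau> j then s j else 0))"
    using i j by (simp add: MM_def scalar_prod_def)
  also have "\<dots> = (\<Sum>k\<in>{0..<N}. if k = \<tau> j then (if i = \<pi> k then t k else 0) * s j else 0)"
    by (rule sum.cong) auto
  also have "\<dots> = (if i = \<pi> (\<tau> j) then t (\<tau> j) * s j else 0)"
    using assms j by (simp add: sum.delta')
  finally show "(MM N \<pi> t * MM N \<tau> s) $$ (i,j) = MM N (\<pi> \<circ> \<tau>) (\<lambda>j. t (\<tau> j) * s j) $$ (i,j)"
    using i j by (simp add: MM_def)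
qed auto

lemma MM_cong: "(\<And>j. j < N \<Longrightarrow> \<pi> j = \<pi>' j) \<Longrightarrow> (\<And>j. j < N \<Longrightarrow> t j = t' j) \<Longrightarrow> MM N \<pi> t = MM N \<pi>' t'"
  by (rule eq_matI) (auto simp: MM_def)

lemma perm_MM: "perm_mat N \<sigma> = MM N \<sigma> (\<lambda>_. 1)"
  by (rule eq_matI) (auto simp: MM_def perm_mat_def)
lemma tpow_MM: "tpow N k d = MM N (\<lambda>j. j) (\<lambda>i. if i = k then zeta N powi d else 1)"
  by (rule eq_matI) (auto simp: MM_def tpow_def)
lemma tmat_MM: "tmat N k = MM N (\<lambda>j. j) (\<lambda>i. if i = k then zeta N else 1)"
  by (rule eq_matI) (auto simp: MM_def tmat_def)
lemma one_MM: "1\<^sub>m N = MM N (\<lambda>j. j) (\<lambda>_. 1)"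
  by (rule eq_matI) (auto simp: MM_def)

lemma one_MM': "MM N (\<lambda>a. a) (\<lambda>_. 1) = 1\<^sub>m N"
  using one_MM by (simp add: id_def)

lemma det_MM: "det (MM N (\<lambda>j. j) f) = (\<Prod>i<N. f i)"
proof -
  have "upper_triangular (MM N (\<lambda>j. j) f)" by (auto simp: MM_def upper_triangular_def)
  hence "det (MM N (\<lambda>j. j) f) = prod_list (diag_mat (MM N (\<lambda>j. j) f))"
    by (rule det_upper_triangular[OF _ MM_carrier])
  also have "\<dots> = prod_list (map f [0..<N])"
    unfolding diag_mat_def MM_def by (intro arg_cong[where f=prod_list] map_cong) auto
  also have "\<dots> = prod f (set [0..<N])"
    by (rule prod.distinct_set_conv_list[symmetric]) simp
  also have "\<dots> = (\<Prod>i<N. f i)"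
    by (simp add: lessThan_atLeast0)
  finally show ?thesis .
qed

lemma zeta_nz[simp]: "zeta N \<noteq> 0" by (simp add: zeta_def)

lemma zeta_pow_N: "N > 0 \<Longrightarrow> zeta N ^ N = 1"
proof -
  assume "N > 0"
  have "zeta N ^ N = exp (of_nat N * (2 * pi * \<i> / of_nat N))"
    unfolding zeta_def by (rule exp_of_nat_mult[symmetric])
  also have "\<dots> = exp (2 * pi * \<i>)" using \<open>N > 0\<close> by simp
  also have "\<dots> = 1" by (simp add: exp_eq_polar)
  finally show ?thesis .
qed


lemma powi_sum: "finite A \<Longrightarrow> zeta N powi (\<Sum>i\<in>A. a i) = (\<Prod>i\<in>A. zeta N powi a i)"
  by (induction A rule: finite_induct) (auto simp: power_int_add)

lemma Gfd_MM: "g \<in> Gfd N \<Longrightarrow> \<exists>e. g = MM N (\<lambda>j. j) (\<lambda>i. zeta N powi e i)"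
  unfolding Gfd_def
proof (induction rule: gen_grp.induct)
  case one
  show ?case by (rule exI[of _ "\<lambda>_. 0"]) (simp add: one_MM)
next
  case (gen x)
  then obtain k where "x = tmat N k" by auto
  thus ?case by (intro exI[of _ "\<lambda>i. if i = k then 1 else 0"]) (auto simp: tmat_MM intro!: MM_cong)
next
  case (mult a b)
  then obtain e1 e2 where a: "a = MM N (\<lambda>j. j) (\<lambda>i. zeta N powi e1 i)" and b: "b = MM N (\<lambda>j. j) (\<lambda>i. zeta N powi e2 i)" by auto
  show ?case
    apply (rule exI[of _ "\<lambda>i. e1 i + e2 i"])
    apply (simp add: a b MM_mult power_int_add)
    by (rule MM_cong) auto
next
  case (inv a b)
  then obtain e where a: "a = MM N (\<lambda>j. j) (\<lambda>i. zeta N powi e i)" by auto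
  let ?c = "MM N (\<lambda>j. j) (\<lambda>i. zeta N powi (- e i))"
  have ca: "?c * a = 1\<^sub>m N"
    unfolding a one_MM by (auto simp: MM_mult power_int_minus o_def intro!: MM_cong)
  have bc: "b \<in> carrier_mat N N" and ab: "a * b = 1\<^sub>m N" using inv by auto
  have "b = (?c * a) * b" using bc ca by simp
  also have "\<dots> = ?c * (a * b)" using bc a by (simp add: assoc_mult_mat[of _ N N _ N _ N])
  also have "\<dots> = ?c" using ab by simp
  finally show ?case by (intro exI[of _ "\<lambda>i. - e i"])
qed

lemma tpow_nat_in: "k < N \<Longrightarrow> tpow N k (int n) \<in> Gfd N"
proof (induction n)
  case 0
  have "tpow N k (int 0) = 1\<^sub>m N" unfolding tpow_MM one_MM by (auto intro!: MM_cong)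
  thus ?case unfolding Gfd_def by (simp add: gen_grp.one)
next
  case (Suc n)
  have "tpow N k (int (Suc n)) = tmat N k * tpow N k (int n)"
    by (auto simp: tpow_MM tmat_MM MM_mult o_def power_int_add intro!: MM_cong)
  moreover have "tmat N k \<in> Gfd N" unfolding Gfd_def using Suc.prems by (auto intro: gen_grp.gen)
  ultimately show ?case using Suc unfolding Gfd_def by (auto intro: gen_grp.mult)
qed

lemma tpow_in: assumes "k < N" shows "tpow N k d \<in> Gfd N"
proof (cases "d \<ge> 0")
  case True
  then obtain n where "d = int n" by (metis nonneg_eq_int)
  thus ?thesis using tpow_nat_in assms by simp
next
  case False
  then obtain n where d: "d = - int n" by (metis neg_int_cases linorder_not_le less_imp_le)
  have "tpow N k (int n) * tpow N k d = 1\<^sub>m N"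
    unfolding one_MM by (auto simp: d tpow_MM MM_mult power_int_minus o_def intro!: MM_cong)
  thus ?thesis using tpow_nat_in[OF assms, of n] unfolding Gfd_def
    by (auto intro: gen_grp.inv simp: tpow_MM)
qed

lemma MM_in_Gfd: "MM N (\<lambda>j. j) (\<lambda>i. zeta N powi a i) \<in> Gfd N"
proof -
  have "\<forall>n\<le>N. MM N (\<lambda>j. j) (\<lambda>i. if i < n then zeta N powi a i else 1) \<in> Gfd N"
  proof (intro allI impI)
    fix n assume "n \<le> N" thus "MM N (\<lambda>j. j) (\<lambda>i. if i < n then zeta N powi a i else 1) \<in> Gfd N"
    proof (induction n)
      case 0 thus ?case unfolding Gfd_def by (simp add: gen_grp.one flip: one_MM)
    next
      case (Suc n)
      have "MM N (\<lambda>j. j) (\<lambda>i. if i < Suc n then zeta N powi a i else 1)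
          = tpow N n (a n) * MM N (\<lambda>j. j) (\<lambda>i. if i < n then zeta N powi a i else 1)"
        by (auto simp: tpow_MM MM_mult o_def less_Suc_eq intro!: MM_cong)
      moreover have "tpow N n (a n) \<in> Gfd N" using Suc.prems by (simp add: tpow_in)
      ultimately show ?case using Suc unfolding Gfd_def by (auto intro: gen_grp.mult)
    qed
  qed
  hence "MM N (\<lambda>j. j) (\<lambda>i. if i < N then zeta N powi a i else 1) \<in> Gfd N" by simp
  moreover have "MM N (\<lambda>j. j) (\<lambda>i. if i < N then zeta N powi a i else 1) = MM N (\<lambda>j. j) (\<lambda>i. zeta N powi a i)"
    by (rule MM_cong) auto
  ultimately show ?thesis by simp
qed



locale pm = fixes N :: nat and \<sigma> :: "nat \<Rightarrow> nat" assumes perm: "\<sigma> permutes {..<N}"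
begin

abbreviation orb where "orb \<equiv> cyc_orbit \<sigma>"

lemma sigma_lt: "j < N \<Longrightarrow> \<sigma> j < N"
  using perm permutes_in_image by fastforce

lemma funpow_lt: "j < N \<Longrightarrow> (\<sigma>^^k) j < N"
  by (induction k) (auto simp: sigma_lt)

lemma orb_sub: "j < N \<Longrightarrow> orb j \<subseteq> {..<N}"
  by (auto simp: cyc_orbit_def funpow_lt)

lemma orb_finite: "j < N \<Longrightarrow> finite (orb j)"
  using orb_sub finite_subset by blast

lemma self_in: "j \<in> orb j"
  unfolding cyc_orbit_def by (auto intro: exI[of _ 0])

lemma orb_step: "orb (\<sigma> j) = orb j"
proof -
  have "permutation \<sigma>" using perm by (auto simp: permutation_permutes)
  then obtain n where n: "\<sigma>^^n = id" "n > 0" by (rule permutation_is_nilpotent)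
  show ?thesis
  proof
    show "orb (\<sigma> j) \<subseteq> orb j"
    proof
      fix x assume "x \<in> orb (\<sigma> j)"
      then obtain k where x: "x = (\<sigma>^^k) (\<sigma> j)" by (auto simp: cyc_orbit_def)
      hence "x = (\<sigma>^^(Suc k)) j" by (metis comp_apply funpow_Suc_right)
      thus "x \<in> orb j" unfolding cyc_orbit_def by blast
    qed
  next
    show "orb j \<subseteq> orb (\<sigma> j)"
    proof
      fix x assume "x \<in> orb j"
      then obtain k where x: "x = (\<sigma>^^k) j" by (auto simp: cyc_orbit_def)
      have "(\<sigma>^^(k + n - 1)) (\<sigma> j) = (\<sigma>^^(k + n)) j"
        using n(2) by (metis Suc_diff_1 add_gr_0 comp_apply funpow_Suc_right)
      also have "\<dots> = (\<sigma>^^k) ((\<sigma>^^n) j)" by (simp add: funpow_add)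
      also have "\<dots> = x" using n x by simp
      finally show "x \<in> orb (\<sigma> j)" unfolding cyc_orbit_def by blast
    qed
  qed
qed

lemma orb_funpow: "orb ((\<sigma>^^k) j) = orb j"
  by (induction k) (auto simp: orb_step)

lemma orb_mem: "x \<in> orb j \<Longrightarrow> orb x = orb j"
proof -
  assume "x \<in> orb j"
  then obtain k where "x = (\<sigma>^^k) j" by (auto simp: cyc_orbit_def)
  thus ?thesis using orb_funpow by simp
qed

definition rr where "rr j = Min (orb j)"

lemma rr_in: "j < N \<Longrightarrow> rr j \<in> orb j"
  unfolding rr_def using orb_finite self_in by (intro Min_in) auto

lemma rr_lt: "j < N \<Longrightarrow> rr j < N"
  using rr_in orb_sub by blast

lemma orb_rr: "j < N \<Longrightarrow> orb (rr j) = orb j"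
  using rr_in orb_mem by blast

lemma rr_rep: "j < N \<Longrightarrow> rr j \<in> cycle_reps N \<sigma>"
  unfolding cycle_reps_def using rr_lt orb_rr by (auto simp: rr_def)

lemma reps_disj: "r \<in> cycle_reps N \<sigma> \<Longrightarrow> r' \<in> cycle_reps N \<sigma> \<Longrightarrow> x \<in> orb r \<Longrightarrow> x \<in> orb r' \<Longrightarrow> r = r'"
  unfolding cycle_reps_def by (metis (mono_tags, lifting) mem_Collect_eq orb_mem)

lemma rr_step: "rr (\<sigma> j) = rr j"
  by (simp add: rr_def orb_step)


definition piL where "piL L j = (if \<exists>i\<in>set L. j \<in> orb i then \<sigma> j else j)"
definition tL where "tL d L j = (if j \<in> set L then zeta N powi d j else 1)"

lemma piL_lt: "j < N \<Longrightarrow> piL L j < N"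
  by (auto simp: piL_def sigma_lt)

lemma foldr_MM: "distinct L \<Longrightarrow> set L \<subseteq> cycle_reps N \<sigma> \<Longrightarrow>
  foldr (\<lambda>i A. perm_mat N (cycle_perm \<sigma> i) * tpow N i (d i) * A) L (1\<^sub>m N) = MM N (piL L) (tL d L)"
proof (induction L)
  case Nil
  show ?case by (simp add: one_MM piL_def tL_def)
next
  case (Cons i L)
  have IH: "foldr (\<lambda>i A. perm_mat N (cycle_perm \<sigma> i) * tpow N i (d i) * A) L (1\<^sub>m N) = MM N (piL L) (tL d L)"
    using Cons by auto
  have iL: "i \<notin> set L" and irep: "i \<in> cycle_reps N \<sigma>" and Lrep: "set L \<subseteq> cycle_reps N \<sigma>"
    using Cons.prems by auto
  let ?ti = "\<lambda>j. if j = i then zeta N powi d i else 1"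
  have "foldr (\<lambda>i A. perm_mat N (cycle_perm \<sigma> i) * tpow N i (d i) * A) (i # L) (1\<^sub>m N)
      = MM N (cycle_perm \<sigma> i) (\<lambda>_. 1) * MM N (\<lambda>j. j) ?ti * MM N (piL L) (tL d L)"
    by (simp only: foldr.simps o_apply IH) (simp add: perm_MM tpow_MM)
  also have "\<dots> = MM N (cycle_perm \<sigma> i \<circ> piL L) (\<lambda>j. ?ti (piL L j) * tL d L j)"
    by (simp add: MM_mult piL_lt o_def)
  also have "\<dots> = MM N (piL (i # L)) (tL d (i # L))"
  proof (rule MM_cong)
    fix j assume j: "j < N"
    show "(cycle_perm \<sigma> i \<circ> piL L) j = piL (i # L) j"
    proof (cases "\<exists>l\<in>set L. j \<in> orb l")
      case True
      then obtain l where l: "l \<in> set L" "j \<in> orb l" by blast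
      have "\<sigma> j \<in> orb l" using l orb_step orb_mem by (metis self_in)
      moreover have "l \<noteq> i" using l iL by auto
      ultimately have "\<sigma> j \<notin> orb i" using reps_disj irep Lrep l by blast
      thus ?thesis using True by (simp add: piL_def cycle_perm_def)
    next
      case False
      thus ?thesis by (simp add: piL_def cycle_perm_def)
    qed
    show "?ti (piL L j) * tL d L j = tL d (i # L) j"
    proof -
      have "piL L j = i \<longleftrightarrow> j = i"
      proof (cases "\<exists>l\<in>set L. j \<in> orb l")
        case True
        then obtain l where l: "l \<in> set L" "j \<in> orb l" by blast
        have "\<sigma> j \<in> orb l" using l orb_step orb_mem by (metis self_in)
        moreover have "l \<noteq> i" using l iL by auto
        ultimately have "\<sigma> j \<noteq> i" "j \<noteq> i" using reps_disj irep Lrep l self_in by blast+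
        thus ?thesis using True by (simp add: piL_def)
      next
        case False
        thus ?thesis by (simp add: piL_def)
      qed
      thus ?thesis using iL by (auto simp: tL_def)
    qed
  qed
  finally show ?case .
qed

lemma cnf_MM: "cycle_normal_form N \<sigma> d = MM N \<sigma> (\<lambda>j. if j \<in> cycle_reps N \<sigma> then zeta N powi d j else 1)"
proof -
  have fin: "finite (cycle_reps N \<sigma>)" unfolding cycle_reps_def by simp
  have "cycle_normal_form N \<sigma> d = MM N (piL (sorted_list_of_set (cycle_reps N \<sigma>))) (tL d (sorted_list_of_set (cycle_reps N \<sigma>)))"
    unfolding cycle_normal_form_def by (rule foldr_MM) (simp_all add: fin)
  also have "\<dots> = MM N \<sigma> (\<lambda>j. if j \<in> cycle_reps N \<sigma> then zeta N powi d j else 1)"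
  proof (rule MM_cong)
    fix j assume "j < N"
    hence "rr j \<in> cycle_reps N \<sigma>" "j \<in> orb (rr j)" using rr_rep orb_rr self_in by auto
    thus "piL (sorted_list_of_set (cycle_reps N \<sigma>)) j = \<sigma> j" using fin by (auto simp: piL_def)
  qed (simp add: tL_def fin)
  finally show ?thesis .
qed


definition nn where "nn j = (LEAST k. (\<sigma>^^k) j = rr j)"
definition ss :: "(nat \<Rightarrow> int) \<Rightarrow> nat \<Rightarrow> int" where "ss e j = (\<Sum>l<nn j. e ((\<sigma>^^l) j))"

lemma ss_step:
  assumes j: "j < N" and nr: "j \<noteq> rr j"
  shows "ss e j = e j + ss e (\<sigma> j)"
proof -
  have ex: "\<exists>k. (\<sigma>^^k) j = rr j" using rr_in[OF j] by (auto simp: cyc_orbit_def)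
  have nnj: "(\<sigma>^^(nn j)) j = rr j" unfolding nn_def[of j] using ex by (rule LeastI_ex)
  have pos: "nn j > 0" using nnj nr by (cases "nn j") auto
  have a: "(\<sigma>^^(nn j - 1)) (\<sigma> j) = rr (\<sigma> j)"
    using nnj pos rr_step by (metis Suc_diff_1 comp_apply funpow_Suc_right)
  have le: "nn (\<sigma> j) \<le> nn j - 1"
    using Least_le[of "\<lambda>k. (\<sigma>^^k) (\<sigma> j) = rr (\<sigma> j)", OF a] by (simp only: nn_def[of "\<sigma> j"])
  have ex2: "\<exists>k. (\<sigma>^^k) (\<sigma> j) = rr (\<sigma> j)" using a by blast
  have b: "(\<sigma>^^(nn (\<sigma> j))) (\<sigma> j) = rr (\<sigma> j)" unfolding nn_def[of "\<sigma> j"] using ex2 by (rule LeastI_ex)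
  hence "(\<sigma>^^(Suc (nn (\<sigma> j)))) j = rr j" using rr_step by (metis comp_apply funpow_Suc_right)
  hence "nn j \<le> Suc (nn (\<sigma> j))"
    using Least_le[of "\<lambda>k. (\<sigma>^^k) j = rr j"] by (simp only: nn_def[of j])
  hence eq: "nn j = Suc (nn (\<sigma> j))" using le pos by linarith
  have "ss e j = (\<Sum>l<Suc (nn (\<sigma> j)). e ((\<sigma>^^l) j))" by (simp add: ss_def eq)
  also have "\<dots> = e j + (\<Sum>l<nn (\<sigma> j). e ((\<sigma>^^(Suc l)) j))"
    by (subst sum.lessThan_Suc_shift) simp
  also have "\<dots> = e j + ss e (\<sigma> j)"
    unfolding ss_def by (simp add: funpow_Suc_right del: funpow.simps)
  finally show ?thesis .
qed

lemma orb0_step: "(\<sigma> j \<in> orb 0) = (j \<in> orb 0)"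
  by (metis orb_mem orb_step self_in)

end



theorem proposition5:
  fixes N :: nat and S :: "(nat \<Rightarrow> nat) set" and \<sigma> :: "nat \<Rightarrow> nat" and g :: "complex mat"
  assumes "prime N"
    and "\<forall>\<tau>\<in>S. \<tau> permutes {..<N}"
    and "\<sigma> \<in> S"
    and "g \<in> SLf N"
    and "num_cycles N \<sigma> \<ge> 2"
  shows "\<exists>d :: nat \<Rightarrow> int.
           conj_in N (SG N S) (perm_mat N \<sigma> * g) (cycle_normal_form N \<sigma> d)"
proof -
  interpret pm N \<sigma> using assms(2,3) by unfold_locales auto
  have N0: "N > 0" using assms(1) prime_gt_0_nat by blast
  obtain e where ge: "g = MM N (\<lambda>j. j) (\<lambda>i. zeta N powi e i)"
    using assms(4) Gfd_MM unfolding SLf_def by blast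
  define Ob where "Ob = orb 0"
  define L where "L = card Ob"
  have Osub: "Ob \<subseteq> {..<N}" unfolding Ob_def using orb_sub N0 by blast
  have "L > 0" unfolding L_def Ob_def using orb_finite[OF N0] self_in by (metis card_gt_0_iff empty_iff)
  have "\<exists>i<N. orb i \<noteq> Ob"
  proof (rule ccontr)
    assume "\<not> ?thesis"
    hence "{cyc_orbit \<sigma> i | i. i < N} = {Ob}" using N0 by auto
    thus False using assms(5) unfolding num_cycles_def by simp
  qed
  then obtain i where i: "i < N" "orb i \<noteq> Ob" by blast
  have "i \<notin> Ob" using i orb_mem unfolding Ob_def by blast
  hence "Ob \<subset> {..<N}" using Osub i by blast
  hence "L < N" unfolding L_def by (metis card_lessThan finite_lessThan psubset_card_mono)
  have "\<not> N dvd L" using \<open>L > 0\<close> \<open>L < N\<close> by (auto dest: dvd_imp_le)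
  hence "coprime N L" using assms(1) by (intro prime_imp_coprime)
  hence "gcd (int L) (int N) = 1" by (metis coprime_commute coprime_iff_gcd_eq_1 coprime_int_iff)
  then obtain x y where xy: "x * int L + y * int N = 1" using bezout_int[of "int L" "int N"] by auto
  define Ss where "Ss = (\<Sum>j<N. ss e j)"
  define C where "C = - Ss * x"
  define a where "a j = (if j \<in> Ob then C else 0) + ss e j" for j
  have "(\<Sum>j<N. a j) = (\<Sum>j<N. if j \<in> Ob then C else 0) + Ss"
    unfolding a_def Ss_def by (simp add: sum.distrib)
  also have "(\<Sum>j<N. if j \<in> Ob then C else 0) = (\<Sum>j\<in>{..<N} \<inter> Ob. C)"
    by (rule sum.inter_restrict[symmetric]) simp
  also have "{..<N} \<inter> Ob = Ob" using Osub by blast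
  also have "(\<Sum>j\<in>Ob. C) = C * int L" unfolding L_def by simp
  also have "C * int L + Ss = Ss * (1 - x * int L)" by (simp add: C_def algebra_simps)
  also have "1 - x * int L = y * int N" using xy by linarith
  finally have suma: "(\<Sum>j<N. a j) = int N * (Ss * y)" by simp
  define h where "h = MM N (\<lambda>j. j) (\<lambda>i. zeta N powi a i)"
  define h' where "h' = MM N (\<lambda>j. j) (\<lambda>i. zeta N powi (- a i))"
  have "det h = (\<Prod>i<N. zeta N powi a i)" unfolding h_def by (rule det_MM)
  also have "\<dots> = zeta N powi (\<Sum>i<N. a i)" by (simp add: powi_sum)
  also have "\<dots> = 1" unfolding suma power_int_mult using zeta_pow_N[OF N0] by simp
  finally have "h \<in> SLf N" unfolding SLf_def h_def using MM_in_Gfd by simp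
  hence hS: "h \<in> SG N S" unfolding SG_def by (auto intro: gen_grp.gen)
  have hh': "h * h' = 1\<^sub>m N"
    unfolding h_def h'_def one_MM by (auto simp: MM_mult power_int_minus intro!: MM_cong)
  have h'S: "h' \<in> SG N S" unfolding SG_def
    by (rule gen_grp.inv[OF hS[unfolded SG_def] _ hh']) (simp add: h'_def)
  define d where "d j = a (\<sigma> j) + e j - a j" for j
  have "h * (perm_mat N \<sigma> * g) * h' = MM N \<sigma> (\<lambda>j. zeta N powi d j)"
    unfolding h_def h'_def ge perm_MM
    by (auto simp: MM_mult sigma_lt d_def power_int_add power_int_diff power_int_minus field_simps intro!: MM_cong)
  also have "\<dots> = cycle_normal_form N \<sigma> d"
    unfolding cnf_MM
  proof (rule MM_cong)
    fix j assume j: "j < N"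
    show "zeta N powi d j = (if j \<in> cycle_reps N \<sigma> then zeta N powi d j else 1)"
    proof (cases "j \<in> cycle_reps N \<sigma>")
      case False
      hence "j \<noteq> rr j" using j unfolding cycle_reps_def rr_def by auto
      hence "ss e j = e j + ss e (\<sigma> j)" using j by (rule ss_step[rotated])
      hence "d j = 0" unfolding d_def a_def Ob_def using orb0_step[of j] by auto
      thus ?thesis using False by simp
    qed simp
  qed simp
  finally show ?thesis unfolding conj_in_def using hS h'S hh' by blast
qed

end
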